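(* Let $J,K\subseteq[n]$ with $|J|=|K|$. Then $\mathfrak F_{J,K}=0$ unless $K\le_{\mathrm{Gale}}J$. Moreover $\mathfrak F_{J,J}=\pm f_J$, where $f_J=\prod_{j\in J}x_j\prod_{j<i\le n}(x_j^2-x_i^2)$.
   Context: For $S\subseteq[n]$ and integer $r$, $h^2_r(S)$ is the complete homogeneous symmetric polynomial of degree $r$ in $\{x_s^2:s\in S\}$, with $h^2_0(S)=1$ and $h^2_r(S)=0$ for $r<0$. Let $\mathcal H$ be the $n\times n$ matrix with $(i,j)$ entry $h^2_{i-j}(\{i,i+1,\dots,n\})$. For a matrix $M$ and row set $R$, column set $C$ of equal size, $\Delta_{R,C}(M)$ is the minor with rows $R$ and columns $C$ (equal to $1$ if $R=C=\emptyset$). For $K\subseteq[n]$, $K^*=\{n+1-k:k\in K\}$. For $J,K\subseteq[n]$ with $|J|=|K|=r$, $$\mathfrak F_{J,K}=\sum_{I\subseteq[n],\,|I|=r}(-1)^{\sum_{i\in I}i}\,\Delta_{[n]\setminus J,\,([n]\setminus I)^*}(\mathcal H)\cdot\det\big(x_k^{2i-1}\big)_{k\in K,\,i\in I},$$ the last determinant having rows indexed by $K$ and columns by $I$ in increasing order. Gale order: for equal-size subsets, $\{a_1<\dots<a_r\}\le_{\mathrm{Gale}}\{b_1<\dots<b_r\}$ iff $a_s\le b_s$ for all $s$. *)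

theory Defs
  imports "Jordan_Normal_Form.Determinant"
begin

text \<open>Polynomials in x_1..x_n are represented by their evaluation functions
  (x :: nat => 'a, 'a an arbitrary commutative ring); x k is the variable x_k.\<close>

definition hsq :: "(nat \<Rightarrow> 'a::comm_ring_1) \<Rightarrow> nat set \<Rightarrow> int \<Rightarrow> 'a" where
  "hsq x S r = (if r < 0 then 0 else
     (\<Sum>m\<in>{m :: nat \<Rightarrow> nat. (\<forall>s. s \<notin> S \<longrightarrow> m s = 0) \<and> sum m S = nat r}.
        \<Prod>s\<in>S. (x s ^ 2) ^ m s))"

definition Hmat :: "nat \<Rightarrow> (nat \<Rightarrow> 'a::comm_ring_1) \<Rightarrow> nat \<Rightarrow> nat \<Rightarrow> 'a" where
  "Hmat n x i j = hsq x {i..n} (int i - int j)"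

text \<open>Minor with rows R, columns C (both in increasing order); 1 for R = C = {}.\<close>
definition minor :: "(nat \<Rightarrow> nat \<Rightarrow> 'a::comm_ring_1) \<Rightarrow> nat set \<Rightarrow> nat set \<Rightarrow> 'a" where
  "minor M R C = det (mat (card R) (card R)
      (\<lambda>(a, b). M (sorted_list_of_set R ! a) (sorted_list_of_set C ! b)))"

definition star :: "nat \<Rightarrow> nat set \<Rightarrow> nat set" where
  "star n K = (\<lambda>k. n + 1 - k) ` K"

definition gale_le :: "nat set \<Rightarrow> nat set \<Rightarrow> bool" where
  "gale_le A B \<longleftrightarrow> card A = card B \<and>
     (\<forall>s < card A. sorted_list_of_set A ! s \<le> sorted_list_of_set B ! s)"

definition frakF :: "nat \<Rightarrow> (nat \<Rightarrow> 'a::comm_ring_1) \<Rightarrow> nat set \<Rightarrow> nat set \<Rightarrow> 'a" where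
  "frakF n x J K = (\<Sum>I\<in>{I. I \<subseteq> {1..n} \<and> card I = card J}.
      (-1) ^ (\<Sum>I) * minor (Hmat n x) ({1..n} - J) (star n ({1..n} - I))
        * minor (\<lambda>k i. x k ^ (2 * i - 1)) K I)"

definition fJ :: "nat \<Rightarrow> (nat \<Rightarrow> 'a::comm_ring_1) \<Rightarrow> nat set \<Rightarrow> 'a" where
  "fJ n x J = (\<Prod>j\<in>J. x j * (\<Prod>i\<in>{j<..n}. x j ^ 2 - x i ^ 2))"

end

theory Submission
  imports Defs
begin


definition dl :: "('r \<Rightarrow> 'c \<Rightarrow> 'a::comm_ring_1) \<Rightarrow> 'r list \<Rightarrow> 'c list \<Rightarrow> 'a" where
  "dl f rs cs = det (mat (length rs) (length rs) (\<lambda>(a,b). f (rs!a) (cs!b)))"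

lemma minor_dl: "minor M R C = dl M (sorted_list_of_set R) (sorted_list_of_set C)"
  unfolding minor_def dl_def by simp

lemma dl_cong: assumes "\<And>a b. a < length rs \<Longrightarrow> b < length rs \<Longrightarrow> f (rs!a) (cs!b) = g (rs!a) (cs!b)"
  shows "dl f rs cs = dl g rs cs"
  unfolding dl_def by (rule arg_cong[of _ _ det], rule eq_matI, auto simp: assms)

lemma dl_cong_set: assumes "\<And>r c. r \<in> set rs \<Longrightarrow> c \<in> set cs \<Longrightarrow> f r c = g r c"
  and "length cs = length rs"
  shows "dl f rs cs = dl g rs cs"
  by (rule dl_cong, rule assms, auto simp: assms(2))

lemma dl_nil[simp]: "dl f [] cs = 1"
  unfolding dl_def by simp

lemma dl_map_rows: "dl f (map g rs) cs = dl (\<lambda>r c. f (g r) c) rs cs"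
  unfolding dl_def by (rule arg_cong[of _ _ det], rule eq_matI, auto)

lemma dl_map_cols: "length cs = length rs \<Longrightarrow> dl f rs (map g cs) = dl (\<lambda>r c. f r (g c)) rs cs"
  unfolding dl_def by (rule arg_cong[of _ _ det], rule eq_matI, auto)

lemma dl_expand:
  assumes "rs \<noteq> []" "length cs = length rs"
  shows "dl f rs cs = (\<Sum>j<length rs. (-1)^j * f (hd rs) (cs!j) * dl f (tl rs) (take j cs @ drop (Suc j) cs))"
proof -
  let ?m = "length rs"
  let ?A = "mat ?m ?m (\<lambda>(a,b). f (rs!a) (cs!b))"
  have A: "?A \<in> carrier_mat ?m ?m" by simp
  have m: "0 < ?m" using assms by simp
  have "dl f rs cs = (\<Sum>j<?m. ?A $$ (0,j) * cofactor ?A 0 j)"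
    unfolding dl_def by (rule laplace_expansion_row[OF A m])
  also have "\<dots> = (\<Sum>j<length rs. (-1)^j * f (hd rs) (cs!j) * dl f (tl rs) (take j cs @ drop (Suc j) cs))"
  proof (rule sum.cong[OF refl])
    fix j assume j: "j \<in> {..<?m}"
    have md: "mat_delete ?A 0 j = mat (length (tl rs)) (length (tl rs)) (\<lambda>(a,b). f (tl rs!a) ((take j cs @ drop (Suc j) cs)!b))"
      using j assms by (intro eq_matI) (auto simp: mat_delete_def nth_append nth_tl min_def)
    show "?A $$ (0,j) * cofactor ?A 0 j = (-1)^j * f (hd rs) (cs!j) * dl f (tl rs) (take j cs @ drop (Suc j) cs)"
      unfolding cofactor_def md dl_def using j m by (simp add: hd_conv_nth)
  qed
  finally show ?thesis .
qed

lemma dl_zero_col: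
  assumes "c \<in> set cs" "\<And>r. r \<in> set rs \<Longrightarrow> f r c = 0" "length cs = length rs"
  shows "dl f rs cs = 0"
proof -
  let ?m = "length rs"
  let ?A = "mat ?m ?m (\<lambda>(a,b). f (rs!a) (cs!b))"
  obtain j where j: "j < ?m" "cs ! j = c" using assms(1,3) by (metis in_set_conv_nth)
  have "dl f rs cs = (\<Sum>i<?m. ?A $$ (i,j) * cofactor ?A i j)"
    unfolding dl_def by (rule laplace_expansion_column[OF _ j(1)], simp)
  also have "\<dots> = 0" using j assms(2) by (intro sum.neutral) auto
  finally show ?thesis .
qed

lemma dl_rev_cols:
  assumes "length cs = length rs"
  shows "dl f rs (rev cs) = signof (\<lambda>i. if i < length rs then length rs - 1 - i else i) * dl f rs cs"
proof -
  let ?m = "length rs"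
  define p where "p = (\<lambda>i. if i < ?m then ?m - 1 - i else i)"
  have pp: "p permutes {0..<?m}"
  proof -
    have "p \<circ> p = id" unfolding p_def by (auto simp: fun_eq_iff)
    hence "bij p" using o_bij by blast
    moreover have "\<forall>x. x \<notin> {0..<?m} \<longrightarrow> p x = x" unfolding p_def by auto
    ultimately show ?thesis by (auto simp: permutes_def bij_iff)
  qed
  let ?B = "mat ?m ?m (\<lambda>(a,b). f (rs!a) (cs!b))"
  let ?A = "mat ?m ?m (\<lambda>(a,b). f (rs!a) (rev cs!b))"
  have BT: "transpose_mat ?B \<in> carrier_mat ?m ?m" by simp
  have "transpose_mat ?A = mat ?m ?m (\<lambda>(i,j). transpose_mat ?B $$ (p i, j))"
    using assms by (intro eq_matI) (auto simp: p_def rev_nth)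
  hence "det (transpose_mat ?A) = signof p * det (transpose_mat ?B)"
    using det_permute_rows[OF BT pp] by simp
  moreover have "det (transpose_mat ?A) = det ?A" using det_transpose[of ?A ?m] by simp
  moreover have "det (transpose_mat ?B) = det ?B" using det_transpose[of ?B ?m] by simp
  ultimately show ?thesis unfolding dl_def p_def by simp
qed


definition pos :: "nat set \<Rightarrow> nat \<Rightarrow> nat" where
  "pos S c = card {s\<in>S. s < c}"

lemma sl_facts: "finite S \<Longrightarrow> distinct (sorted_list_of_set S) \<and> sorted (sorted_list_of_set S) \<and> set (sorted_list_of_set S) = S \<and> length (sorted_list_of_set S) = card S"
  by simp

lemma sl_less_iff:
  assumes S: "finite S" and i: "i < card S" and j: "j < card S"
  shows "(sorted_list_of_set S ! i < sorted_list_of_set S ! j) = (i < j)"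
proof -
  let ?xs = "sorted_list_of_set S"
  have "sorted_wrt (<) ?xs" using S by simp
  hence a: "i < j \<Longrightarrow> ?xs!i < ?xs!j" using i j S by (simp add: sorted_wrt_iff_nth_less)
  have b: "j \<le> i \<Longrightarrow> ?xs!j \<le> ?xs!i" using i j S by (simp add: sorted_nth_mono)
  show ?thesis using a b by (meson leD not_less)
qed

lemma pos_nth:
  assumes S: "finite S" and j: "j < card S"
  shows "pos S (sorted_list_of_set S ! j) = j"
proof -
  let ?xs = "sorted_list_of_set S"
  have "{s\<in>S. s < ?xs!j} = (\<lambda>i. ?xs!i) ` {..<j}"
  proof (rule equalityI; rule subsetI)
    fix s assume "s \<in> {s\<in>S. s < ?xs!j}"
    then obtain i where i: "i < card S" "s = ?xs!i" "s < ?xs ! j" using S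
      by (metis (no_types, lifting) in_set_conv_nth mem_Collect_eq sl_facts)
    hence "i < j" using sl_less_iff[OF S i(1) j] by simp
    thus "s \<in> (\<lambda>i. ?xs!i) ` {..<j}" using i by auto
  next
    fix s assume "s \<in> (\<lambda>i. ?xs!i) ` {..<j}"
    then obtain i where i: "i < j" "s = ?xs!i" by auto
    hence "i < card S" using j by simp
    thus "s \<in> {s\<in>S. s < ?xs!j}" using i sl_less_iff[OF S _ j] S
      by (metis (no_types, lifting) mem_Collect_eq nth_mem sl_facts)
  qed
  moreover have "inj_on (\<lambda>i. ?xs!i) {..<j}" using S j
    by (intro inj_onI) (simp add: nth_eq_iff_index_eq)
  ultimately show ?thesis unfolding pos_def by (simp add: card_image)
qed

lemma nth_pos:
  assumes S: "finite S" and s: "s \<in> S"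
  shows "pos S s < card S" "sorted_list_of_set S ! pos S s = s"
proof -
  obtain i where i: "i < card S" "s = sorted_list_of_set S ! i" using S s
    by (metis in_set_conv_nth sl_facts)
  thus "pos S s < card S" "sorted_list_of_set S ! pos S s = s" using pos_nth[OF S i(1)] by auto
qed

lemma remove1_nth_distinct: "distinct xs \<Longrightarrow> j < length xs \<Longrightarrow> remove1 (xs!j) xs = take j xs @ drop (Suc j) xs"
proof -
  assume d: "distinct xs" and j: "j < length xs"
  have e: "xs = take j xs @ xs!j # drop (Suc j) xs" using j by (simp add: id_take_nth_drop)
  have "xs!j \<notin> set (take j xs)" using d j
    by (metis e distinct_append distinct.simps(2) list.set_intros(1) disjoint_iff)
  hence "remove1 (xs!j) (take j xs @ xs!j # drop (Suc j) xs) = take j xs @ drop (Suc j) xs"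
    by (simp add: remove1_append)
  thus ?thesis using e by metis
qed

lemma sl_del:
  assumes S: "finite S" and j: "j < card S"
  shows "take j (sorted_list_of_set S) @ drop (Suc j) (sorted_list_of_set S) = sorted_list_of_set (S - {sorted_list_of_set S ! j})"
  using S j by (simp add: sorted_list_of_set_remove remove1_nth_distinct)

lemma dl_expand_set:
  assumes S: "finite S" and len: "length rs = card S" and ne: "rs \<noteq> []"
  shows "dl f rs (sorted_list_of_set S) = (\<Sum>s\<in>S. (-1)^(pos S s) * f (hd rs) s * dl f (tl rs) (sorted_list_of_set (S - {s})))"
proof -
  let ?xs = "sorted_list_of_set S"
  have "dl f rs ?xs = (\<Sum>j<length rs. (-1)^j * f (hd rs) (?xs!j) * dl f (tl rs) (take j ?xs @ drop (Suc j) ?xs))"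
    by (rule dl_expand[OF ne], simp add: S len)
  also have "\<dots> = (\<Sum>s\<in>S. (-1)^(pos S s) * f (hd rs) s * dl f (tl rs) (sorted_list_of_set (S - {s})))"
  proof (rule sum.reindex_bij_witness[where i = "pos S" and j = "\<lambda>j. ?xs!j"])
    fix a assume "a \<in> {..<length rs}"
    hence a: "a < card S" using len by simp
    show "pos S (?xs!a) = a" by (rule pos_nth[OF S a])
    show "?xs!a \<in> S" using a S by (metis nth_mem sl_facts)
    show "(-1)^(pos S (?xs!a)) * f (hd rs) (?xs!a) * dl f (tl rs) (sorted_list_of_set (S - {?xs!a})) =
      (-1)^a * f (hd rs) (?xs!a) * dl f (tl rs) (take a ?xs @ drop (Suc a) ?xs)"
      using pos_nth[OF S a] sl_del[OF S a] by simp
  next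
    fix b assume b: "b \<in> S"
    show "?xs ! pos S b = b" "pos S b \<in> {..<length rs}" using nth_pos[OF S b] len by auto
  qed
  finally show ?thesis .
qed


lemma pos_remove:
  assumes S: "finite S" and c: "c \<in> S" "c \<noteq> s" and s: "s \<in> S"
  shows "pos S c = pos (S - {s}) c + (if s < c then 1 else 0)"
proof -
  have fin: "finite {x\<in>S - {s}. x < c}" using S by simp
  show ?thesis
  proof (cases "s < c")
    case True
    hence "{x\<in>S. x < c} = insert s {x\<in>S - {s}. x < c}" using s by auto
    thus ?thesis unfolding pos_def using True fin by simp
  next
    case False
    hence "{x\<in>S. x < c} = {x\<in>S - {s}. x < c}" by auto
    thus ?thesis unfolding pos_def using False by simp
  qed
qed

lemma sign_step:
  assumes S: "finite S" and CS: "C \<subseteq> S" and s: "s \<in> C" and cC: "card C = Suc k"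
  shows "(-1::'a::comm_ring_1)^(pos S s) * (-1)^((\<Sum>c\<in>C-{s}. pos (S-{s}) c) + k*(k-1) div 2)
       = (-1)^((\<Sum>c\<in>C. pos S c) + Suc k * k div 2) * (-1)^(pos C s)"
proof -
  have C: "finite C" using S CS finite_subset by blast
  have sS: "s \<in> S" using s CS by auto
  have 1: "(\<Sum>c\<in>C. pos S c) = pos S s + (\<Sum>c\<in>C-{s}. pos S c)"
    using C s by (simp add: sum.remove)
  have 2: "(\<Sum>c\<in>C-{s}. pos S c) = (\<Sum>c\<in>C-{s}. pos (S-{s}) c) + (\<Sum>c\<in>C-{s}. (if s < c then 1 else 0))"
    unfolding sum.distrib[symmetric] using CS
    by (intro sum.cong[OF refl] pos_remove[OF S _ _ sS]) auto
  have 3: "(\<Sum>c\<in>C-{s}. (if s < c then 1 else 0::nat)) = card {c\<in>C-{s}. s < c}"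
    using C by (simp add: sum.If_cases Int_def)
  have 4: "card {c\<in>C-{s}. s < c} + pos C s = k"
  proof -
    have "C - {s} = {c\<in>C-{s}. s < c} \<union> {c\<in>C. c < s}" by auto
    moreover have "{c\<in>C-{s}. s < c} \<inter> {c\<in>C. c < s} = {}" by auto
    ultimately have "card (C - {s}) = card {c\<in>C-{s}. s < c} + card {c\<in>C. c < s}"
      using C by (metis (no_types, lifting) card_Un_disjoint finite_Diff finite_Un)
    moreover have "card (C - {s}) = k" using C s cC by simp
    ultimately show ?thesis unfolding pos_def by simp
  qed
  have 5: "Suc k * k div 2 = k*(k-1) div 2 + k"
  proof (cases k)
    case 0 then show ?thesis by simp
  next
    case (Suc m)
    have "Suc k * k = k*(k-1) + 2*k" using Suc by (simp add: algebra_simps)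
    thus ?thesis by simp
  qed
  have "(\<Sum>c\<in>C. pos S c) + Suc k * k div 2 + pos C s
     = (pos S s + ((\<Sum>c\<in>C-{s}. pos (S-{s}) c) + k*(k-1) div 2)) + 2*k"
    unfolding 1 2 3 5 using 4 by linarith
  hence "(-1::'a)^((\<Sum>c\<in>C. pos S c) + Suc k * k div 2) * (-1)^(pos C s)
     = (-1)^(pos S s + ((\<Sum>c\<in>C-{s}. pos (S-{s}) c) + k*(k-1) div 2)) * (-1)^(2*k)"
    by (metis power_add)
  thus ?thesis by (simp add: power_add power_mult)
qed

lemma laplace_gen:
  fixes f :: "'r \<Rightarrow> nat \<Rightarrow> 'a::comm_ring_1"
  assumes "finite S" "length rs = card S" "k \<le> card S"
  shows "dl f rs (sorted_list_of_set S) = (\<Sum>C\<in>{C. C \<subseteq> S \<and> card C = k}.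
     (-1)^((\<Sum>c\<in>C. pos S c) + k*(k-1) div 2) * dl f (take k rs) (sorted_list_of_set C)
        * dl f (drop k rs) (sorted_list_of_set (S - C)))"
  using assms
proof (induction k arbitrary: rs S)
  case 0
  have "{C. C \<subseteq> S \<and> card C = 0} = {{}}" using 0 by (auto simp: rev_finite_subset)
  thus ?case by simp
next
  case (Suc k)
  note S = Suc.prems(1)
  have ne: "rs \<noteq> []" using Suc.prems by auto
  define P where "P = (\<lambda>T::nat set. {C. C \<subseteq> T \<and> card C = k})"
  define E where "E = (\<lambda>T C::nat set. (-1::'a)^((\<Sum>c\<in>C. pos T c) + k*(k-1) div 2))"
  define T where "T = (\<lambda>s C'. (-1)^(pos S s) * f (hd rs) s * (E (S-{s}) C'
         * dl f (take k (tl rs)) (sorted_list_of_set C') * dl f (drop k (tl rs)) (sorted_list_of_set (S - {s} - C'))))"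
  have finP: "finite (P T')" if "finite T'" for T' :: "nat set" unfolding P_def using that by simp
  have "dl f rs (sorted_list_of_set S) = (\<Sum>s\<in>S. (-1)^(pos S s) * f (hd rs) s * dl f (tl rs) (sorted_list_of_set (S - {s})))"
    by (rule dl_expand_set[OF S Suc.prems(2) ne])
  also have "\<dots> = (\<Sum>s\<in>S. \<Sum>C'\<in>P (S-{s}). T s C')"
  proof (rule sum.cong[OF refl])
    fix s assume s: "s \<in> S"
    have "dl f (tl rs) (sorted_list_of_set (S - {s})) = (\<Sum>C'\<in>P (S-{s}). E (S-{s}) C'
         * dl f (take k (tl rs)) (sorted_list_of_set C') * dl f (drop k (tl rs)) (sorted_list_of_set (S - {s} - C')))"
      unfolding P_def E_def using Suc.prems s by (intro Suc.IH) auto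
    thus "(-1)^(pos S s) * f (hd rs) s * dl f (tl rs) (sorted_list_of_set (S - {s})) = (\<Sum>C'\<in>P (S-{s}). T s C')"
      unfolding T_def by (simp add: sum_distrib_left)
  qed
  also have "\<dots> = (\<Sum>(s,C')\<in>Sigma S (\<lambda>s. P (S-{s})). T s C')"
    using S finP by (intro sum.Sigma) auto
  also have "\<dots> = (\<Sum>(C,s)\<in>Sigma {C. C \<subseteq> S \<and> card C = Suc k} (\<lambda>C. C). T s (C - {s}))"
  proof (rule sum.reindex_bij_witness[where j = "\<lambda>(s,C'). (insert s C', s)" and i = "\<lambda>(C,s). (s, C - {s})"])
    fix b assume b: "b \<in> Sigma {C. C \<subseteq> S \<and> card C = Suc k} (\<lambda>C. C)"
    obtain C s where as: "b = (C,s)" by (cases b)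
    have C: "finite C" using b as S by (auto intro: finite_subset)
    show "(case (case b of (C, s) \<Rightarrow> (s, C - {s})) of (s, C') \<Rightarrow> (insert s C', s)) = b"
      using b as by auto
    show "(case b of (C, s) \<Rightarrow> (s, C - {s})) \<in> Sigma S (\<lambda>s. P (S - {s}))"
      using b as C unfolding P_def by auto
  next
    fix a assume a: "a \<in> Sigma S (\<lambda>s. P (S - {s}))"
    obtain s C' where bs: "a = (s,C')" by (cases a)
    have C': "finite C'" using a bs S unfolding P_def by (auto intro: finite_subset)
    show "(case (case a of (s, C') \<Rightarrow> (insert s C', s)) of (C, s) \<Rightarrow> (s, C - {s})) = a"
      using a bs unfolding P_def by auto
    show "(case a of (s, C') \<Rightarrow> (insert s C', s)) \<in> Sigma {C. C \<subseteq> S \<and> card C = Suc k} (\<lambda>C. C)"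
      using a bs C' unfolding P_def by (auto simp: card_insert_if)
    show "(case (case a of (s, C') \<Rightarrow> (insert s C', s)) of (C, s) \<Rightarrow> T s (C - {s})) = (case a of (s, C') \<Rightarrow> T s C')"
    proof -
      have "s \<notin> C'" using a bs unfolding P_def by auto
      hence "insert s C' - {s} = C'" by simp
      thus ?thesis using bs by simp
    qed
  qed
  also have "\<dots> = (\<Sum>C\<in>{C. C \<subseteq> S \<and> card C = Suc k}. \<Sum>s\<in>C. T s (C - {s}))"
    using S by (intro sum.Sigma[symmetric]) (auto intro: finite_subset)
  also have "\<dots> = (\<Sum>C\<in>{C. C \<subseteq> S \<and> card C = Suc k}.
     (-1)^((\<Sum>c\<in>C. pos S c) + Suc k*(Suc k-1) div 2) * dl f (take (Suc k) rs) (sorted_list_of_set C)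
        * dl f (drop (Suc k) rs) (sorted_list_of_set (S - C)))"
  proof (rule sum.cong[OF refl])
    fix C assume "C \<in> {C. C \<subseteq> S \<and> card C = Suc k}"
    hence CS: "C \<subseteq> S" and cC: "card C = Suc k" by auto
    have C: "finite C" using CS S finite_subset by blast
    have tk: "take (Suc k) rs \<noteq> []" "length (take (Suc k) rs) = card C"
      "hd (take (Suc k) rs) = hd rs" "tl (take (Suc k) rs) = take k (tl rs)"
      using ne cC Suc.prems by (auto simp: hd_conv_nth tl_take min_def)
    have "dl f (take (Suc k) rs) (sorted_list_of_set C) =
        (\<Sum>s\<in>C. (-1)^(pos C s) * f (hd rs) s * dl f (take k (tl rs)) (sorted_list_of_set (C - {s})))"
      using dl_expand_set[OF C tk(2) tk(1)] tk(3,4) by simp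
    hence "(-1)^((\<Sum>c\<in>C. pos S c) + Suc k*(Suc k-1) div 2) * dl f (take (Suc k) rs) (sorted_list_of_set C)
        * dl f (drop (Suc k) rs) (sorted_list_of_set (S - C))
      = (\<Sum>s\<in>C. ((-1)^((\<Sum>c\<in>C. pos S c) + Suc k * k div 2) * (-1)^(pos C s)) * f (hd rs) s
           * dl f (take k (tl rs)) (sorted_list_of_set (C - {s})) * dl f (drop (Suc k) rs) (sorted_list_of_set (S - C)))"
      by (simp add: sum_distrib_left sum_distrib_right algebra_simps)
    also have "\<dots> = (\<Sum>s\<in>C. T s (C - {s}))"
    proof (rule sum.cong[OF refl])
      fix s assume s: "s \<in> C"
      have "S - {s} - (C - {s}) = S - C" using s by auto
      moreover have "drop k (tl rs) = drop (Suc k) rs" by (simp add: drop_Suc)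
      ultimately show "((-1)^((\<Sum>c\<in>C. pos S c) + Suc k * k div 2) * (-1)^(pos C s)) * f (hd rs) s
           * dl f (take k (tl rs)) (sorted_list_of_set (C - {s})) * dl f (drop (Suc k) rs) (sorted_list_of_set (S - C))
           = T s (C - {s})"
        unfolding T_def E_def sign_step[OF S CS s cC, symmetric] by (simp add: algebra_simps)
    qed
    finally show "(\<Sum>s\<in>C. T s (C - {s})) = (-1)^((\<Sum>c\<in>C. pos S c) + Suc k*(Suc k-1) div 2) * dl f (take (Suc k) rs) (sorted_list_of_set C)
        * dl f (drop (Suc k) rs) (sorted_list_of_set (S - C))" by simp
  qed
  finally show ?case .
qed




definition Fs :: "nat set \<Rightarrow> nat \<Rightarrow> (nat \<Rightarrow> nat) set" where
  "Fs S d = {m. (\<forall>s. s \<notin> S \<longrightarrow> m s = 0) \<and> sum m S = d}"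

definition hsum :: "(nat \<Rightarrow> 'a::comm_ring_1) \<Rightarrow> nat set \<Rightarrow> nat \<Rightarrow> 'a" where
  "hsum y S d = (\<Sum>m\<in>Fs S d. \<Prod>s\<in>S. y s ^ m s)"

lemma hsq_hsum: "hsq x S r = (if r < 0 then 0 else hsum (\<lambda>s. x s ^ 2) S (nat r))"
  unfolding hsq_def hsum_def Fs_def by simp

lemma Fs_finite: assumes S: "finite S" shows "finite (Fs S d)"
proof -
  have "Fs S d \<subseteq> (\<lambda>f. \<lambda>s. if s \<in> S then f s else 0) ` (PiE S (\<lambda>_. {..d}))"
  proof
    fix m assume m: "m \<in> Fs S d"
    have le: "m s \<le> d" if "s \<in> S" for s
      using m that S unfolding Fs_def by (metis (mono_tags, lifting) mem_Collect_eq member_le_sum zero_le)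
    have "m = (\<lambda>s. if s \<in> S then (restrict m S) s else 0)" using m unfolding Fs_def by auto
    moreover have "restrict m S \<in> PiE S (\<lambda>_. {..d})" using le by auto
    ultimately show "m \<in> (\<lambda>f. \<lambda>s. if s \<in> S then f s else 0) ` (PiE S (\<lambda>_. {..d}))" by blast
  qed
  moreover have "finite (PiE S (\<lambda>_. {..d::nat}))" using S by (simp add: finite_PiE)
  ultimately show ?thesis by (meson finite_imageI finite_subset)
qed

lemma Fs_zero: assumes S: "finite S" shows "Fs S 0 = {\<lambda>_. 0}"
  unfolding Fs_def using S by (auto simp: fun_eq_iff)

lemma Fs_empty: "Fs {} d = (if d = 0 then {\<lambda>_. 0} else {})"
  unfolding Fs_def by (auto simp: fun_eq_iff)

lemma hsum_zero: "finite S \<Longrightarrow> hsum y S 0 = 1"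
  unfolding hsum_def by (simp add: Fs_zero)

lemma hsum_empty: "hsum y {} d = (if d = 0 then 1 else 0)"
  unfolding hsum_def by (simp add: Fs_empty)

lemma hsum_rec:
  assumes S: "finite S" and a: "a \<notin> S" and d: "d \<ge> 1"
  shows "hsum y (insert a S) d = hsum y S d + y a * hsum y (insert a S) (d - 1)"
proof -
  let ?F = "Fs (insert a S) d"
  let ?g = "\<lambda>m. \<Prod>s\<in>insert a S. y s ^ m s"
  have fin: "finite ?F" using S by (simp add: Fs_finite)
  have split: "sum ?g ?F = sum ?g {m\<in>?F. m a = 0} + sum ?g {m\<in>?F. m a \<noteq> 0}"
  proof -
    have "?F = {m\<in>?F. m a = 0} \<union> {m\<in>?F. m a \<noteq> 0}" by auto
    hence "sum ?g ?F = sum ?g ({m\<in>?F. m a = 0} \<union> {m\<in>?F. m a \<noteq> 0})" by simp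
    also have "\<dots> = sum ?g {m\<in>?F. m a = 0} + sum ?g {m\<in>?F. m a \<noteq> 0}"
      using fin by (intro sum.union_disjoint) auto
    finally show ?thesis .
  qed
  have p1: "sum ?g {m\<in>?F. m a = 0} = hsum y S d"
  proof -
    have "{m\<in>?F. m a = 0} = Fs S d"
    proof (rule equalityI; rule subsetI)
      fix m assume m: "m \<in> {m\<in>?F. m a = 0}"
      hence "\<forall>s. s \<notin> S \<longrightarrow> m s = 0" unfolding Fs_def by (metis (mono_tags, lifting) insertE mem_Collect_eq)
      moreover have "sum m S = d" using m S a unfolding Fs_def by simp
      ultimately show "m \<in> Fs S d" unfolding Fs_def by simp
    next
      fix m assume m: "m \<in> Fs S d"
      hence "m a = 0" using a unfolding Fs_def by simp
      thus "m \<in> {m\<in>?F. m a = 0}" using m S a unfolding Fs_def by simp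
    qed
    moreover have "?g m = (\<Prod>s\<in>S. y s ^ m s)" if "m a = 0" for m
      using S a that by simp
    ultimately show ?thesis unfolding hsum_def
      by (metis (mono_tags, lifting) mem_Collect_eq sum.cong)
  qed
  have p2: "sum ?g {m\<in>?F. m a \<noteq> 0} = y a * hsum y (insert a S) (d - 1)"
  proof -
    have sS: "sum (m(a:=v)) S = sum m S" for m :: "nat \<Rightarrow> nat" and v
      using a by (intro sum.cong) auto
    have pS: "(\<Prod>s\<in>S. y s ^ (m(a:=v)) s) = (\<Prod>s\<in>S. y s ^ m s)" for m :: "nat \<Rightarrow> nat" and v
      using a by (intro prod.cong) auto
    have "sum ?g {m\<in>?F. m a \<noteq> 0} = (\<Sum>m\<in>Fs (insert a S) (d - 1). y a * ?g m)"
    proof (rule sum.reindex_bij_witness[where j = "\<lambda>m. m(a := m a - 1)" and i = "\<lambda>m. m(a := m a + 1)"])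
      fix m assume m: "m \<in> {m\<in>?F. m a \<noteq> 0}"
      show "(m(a := m a - 1))(a := (m(a := m a - 1)) a + 1) = m" using m by auto
      have "sum (m(a := m a - 1)) (insert a S) = (m a - 1) + sum m S"
        using S a sS by simp
      moreover have "sum m (insert a S) = m a + sum m S" using S a by simp
      moreover have "m a + sum m S = d" "\<forall>s. s \<notin> insert a S \<longrightarrow> m s = 0" "m a \<noteq> 0"
        using m unfolding Fs_def by (simp_all add: \<open>sum m (insert a S) = m a + sum m S\<close>)
      ultimately show "m(a := m a - 1) \<in> Fs (insert a S) (d - 1)" unfolding Fs_def
        by (intro CollectI conjI allI impI) simp_all
      have "?g m = y a ^ m a * (\<Prod>s\<in>S. y s ^ m s)" using S a by simp
      moreover have "?g (m(a := m a - 1)) = y a ^ (m a - 1) * (\<Prod>s\<in>S. y s ^ m s)"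
        using S a pS by simp
      moreover have "y a ^ m a = y a * y a ^ (m a - 1)" using m by (cases "m a") auto
      ultimately show "y a * ?g (m(a := m a - 1)) = ?g m" by simp
    next
      fix m assume m: "m \<in> Fs (insert a S) (d - 1)"
      show "(m(a := m a + 1))(a := (m(a := m a + 1)) a - 1) = m" by auto
      have "sum (m(a := m a + 1)) (insert a S) = (m a + 1) + sum m S"
        using S a sS by simp
      moreover have "sum m (insert a S) = m a + sum m S" using S a by simp
      moreover have "m a + sum m S = d - 1" "\<forall>s. s \<notin> insert a S \<longrightarrow> m s = 0"
        using m unfolding Fs_def by (simp_all add: \<open>sum m (insert a S) = m a + sum m S\<close>)
      ultimately show "m(a := m a + 1) \<in> {m\<in>?F. m a \<noteq> 0}" using d unfolding Fs_def
        by (intro CollectI conjI allI impI) simp_all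
    qed
    thus ?thesis unfolding hsum_def by (simp add: sum_distrib_left)
  qed
  show ?thesis unfolding hsum_def[of y "insert a S" d] split p1 p2 ..
qed

lemma hsq_rec:
  assumes j: "j \<le> n"
  shows "hsq x {j..n} r = hsq x {Suc j..n} r + x j ^ 2 * hsq x {j..n} (r - 1)"
proof -
  have ins: "{j..n} = insert j {Suc j..n}" using j by auto
  consider "r < 0" | "r = 0" | "r \<ge> 1" by linarith
  thus ?thesis
  proof cases
    case 1 thus ?thesis by (simp add: hsq_hsum)
  next
    case 2 thus ?thesis by (simp add: hsq_hsum hsum_zero)
  next
    case 3
    have "nat (r - 1) = nat r - 1" using 3 by simp
    thus ?thesis using 3 hsum_rec[of "{Suc j..n}" j "nat r" "\<lambda>s. x s ^ 2"] unfolding ins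
      by (simp add: hsq_hsum)
  qed
qed

lemma hsq_neg: "r < 0 \<Longrightarrow> hsq x S r = 0" by (simp add: hsq_hsum)

lemma hsq_empty: "hsq x {} r = (if r = 0 then 1 else 0)"
  by (simp add: hsq_hsum hsum_empty)

lemma hsq_zero: "finite S \<Longrightarrow> hsq x S 0 = 1"
  by (simp add: hsq_hsum hsum_zero)


definition PP :: "nat \<Rightarrow> (nat \<Rightarrow> 'a::comm_ring_1) \<Rightarrow> 'a \<Rightarrow> nat \<Rightarrow> 'a" where
  "PP n x t j = (\<Prod>l\<in>{j<..n}. t - x l ^ 2)"

lemma PP_step: assumes "1 \<le> j" "j \<le> n" shows "PP n x t (j - 1) = (t - x j ^ 2) * PP n x t j"
proof -
  have "{j - 1<..n} = insert j {j<..n}" using assms by auto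
  thus ?thesis unfolding PP_def by simp
qed

lemma newton_aux:
  assumes "q \<le> n"
  shows "t^d = (\<Sum>j\<in>{n+1-q..n}. PP n x t j * hsq x {j..n} (int j + int d - int n))
     + PP n x t (n-q) * (\<Sum>e\<le>d. hsq x {n+1-q..n} (int (n-q) + int d - int n - int e) * t^e)"
  using assms
proof (induction q)
  case 0
  have "(\<Sum>e\<le>d. hsq x {n+1..n} (int n + int d - int n - int e) * t^e) = (\<Sum>e\<le>d. (if e = d then t^e else 0))"
    by (intro sum.cong refl) (auto simp: hsq_empty)
  also have "\<dots> = t^d" by simp
  finally show ?case unfolding PP_def by simp
next
  case (Suc q)
  define j where "j = n - q"
  have qn: "q \<le> n" using Suc.prems by simp
  have j1: "1 \<le> j" and jn: "j \<le> n" using Suc.prems unfolding j_def by auto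
  have e1: "n + 1 - Suc q = j" "n - Suc q = j - 1" "n + 1 - q = Suc j" "n - q = j"
    using Suc.prems unfolding j_def by auto
  define D where "D = int j + int d - int n"
  define h where "h = (\<lambda>c. hsq x {j..n} c)"
  define y where "y = x j ^ 2"
  define R' where "R' = (\<Sum>e\<le>d. h (D - int e - 1) * t^e)"
  define A where "A = (\<Sum>e\<le>d. h (D - int e) * t^e)"
  have IH: "t^d = (\<Sum>j\<in>{Suc j..n}. PP n x t j * hsq x {j..n} (int j + int d - int n))
     + PP n x t j * (\<Sum>e\<le>d. hsq x {Suc j..n} (int j + int d - int n - int e) * t^e)"
    using Suc.IH[OF qn] unfolding e1(3,4) .
  have rec': "hsq x {Suc j..n} c = h c - y * h (c - 1)" for c
  proof -
    have "h c = hsq x {Suc j..n} c + y * h (c - 1)" unfolding h_def y_def by (rule hsq_rec[OF jn])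
    thus ?thesis by (simp add: algebra_simps)
  qed
  have R: "(\<Sum>e\<le>d. hsq x {Suc j..n} (int j + int d - int n - int e) * t^e) = A - y * R'"
  proof -
    have "(\<Sum>e\<le>d. hsq x {Suc j..n} (int j + int d - int n - int e) * t^e)
        = (\<Sum>e\<le>d. (h (D - int e) - y * h (D - int e - 1)) * t^e)"
      unfolding rec' D_def by (intro sum.cong refl)
    also have "\<dots> = A - y * R'" unfolding A_def R'_def
      by (simp add: sum_subtractf sum_distrib_left algebra_simps)
    finally show ?thesis .
  qed
  have A: "A = h D + t * R'"
  proof -
    have "(\<Sum>e\<le>Suc d. h (D - int e) * t^e) = h D + t * R'"
      unfolding sum.atMost_Suc_shift R'_def by (simp add: sum_distrib_left algebra_simps)
    moreover have "(\<Sum>e\<le>Suc d. h (D - int e) * t^e) = A"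
    proof -
      have "h (D - int (Suc d)) = 0" unfolding h_def D_def using jn by (intro hsq_neg) simp
      thus ?thesis unfolding A_def by simp
    qed
    ultimately show ?thesis by simp
  qed
  have R'eq: "(\<Sum>e\<le>d. hsq x {j..n} (int (j - 1) + int d - int n - int e) * t^e) = R'"
  proof -
    have eq: "int (j - 1) + int d - int n - int e = int j + int d - int n - int e - 1" for e
      using j1 by simp
    show ?thesis unfolding R'_def h_def D_def eq by (rule refl)
  qed
  have sumsplit: "(\<Sum>j\<in>{j..n}. PP n x t j * hsq x {j..n} (int j + int d - int n))
     = PP n x t j * h D + (\<Sum>j\<in>{Suc j..n}. PP n x t j * hsq x {j..n} (int j + int d - int n))"
    unfolding h_def D_def using jn by (simp add: sum.atLeast_Suc_atMost)
  show ?case unfolding e1 sumsplit R'eq PP_step[OF j1 jn]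
    using IH unfolding R A y_def by (simp add: algebra_simps)
qed

lemma newton:
  assumes dn: "d < n"
  shows "t^d = (\<Sum>j\<in>{1..n}. PP n x t j * hsq x {j..n} (int j + int d - int n))"
proof -
  have aux: "t^d = (\<Sum>j\<in>{n+1-n..n}. PP n x t j * hsq x {j..n} (int j + int d - int n))
     + PP n x t (n-n) * (\<Sum>e\<le>d. hsq x {n+1-n..n} (int (n-n) + int d - int n - int e) * t^e)"
    by (rule newton_aux) (rule order_refl)
  have eq1: "n + 1 - n = 1" by simp
  have z: "hsq x {1..n} (int (n-n) + int d - int n - int e) = 0" for e
    by (rule hsq_neg) (use dn in simp)
  show ?thesis using aux unfolding eq1 z by (simp only: mult_zero_left sum.neutral_const mult_zero_right add_0_right)
qed

lemma entry_identity:
  assumes "1 \<le> i" "i \<le> n"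
  shows "x k ^ (2*i - 1) = (\<Sum>j\<in>{1..n}. (x k * PP n x (x k ^ 2) j) * Hmat n x j (n + 1 - i))"
proof -
  have "x k ^ (2*i - 1) = x k * (x k ^ 2) ^ (i - 1)"
    using assms by (cases i) (auto simp: power_mult[symmetric])
  also have "(x k ^ 2) ^ (i - 1) = (\<Sum>j\<in>{1..n}. PP n x (x k ^ 2) j * hsq x {j..n} (int j + int (i - 1) - int n))"
    by (rule newton) (use assms in simp)
  also have "\<dots> = (\<Sum>j\<in>{1..n}. PP n x (x k ^ 2) j * Hmat n x j (n + 1 - i))"
  proof (rule sum.cong[OF refl])
    fix j
    have eq: "int j + int (i - 1) - int n = int j - int (n + 1 - i)" using assms by auto
    show "PP n x (x k ^ 2) j * hsq x {j..n} (int j + int (i - 1) - int n) = PP n x (x k ^ 2) j * Hmat n x j (n + 1 - i)"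
      unfolding Hmat_def eq by (rule refl)
  qed
  finally show ?thesis by (simp add: sum_distrib_left algebra_simps)
qed




lemma sum_sl: assumes T: "finite (T::nat set)" shows "(\<Sum>i<card T. g (sorted_list_of_set T ! i)) = (\<Sum>t\<in>T. g t)"
proof (rule sum.reindex_bij_witness[where i = "pos T" and j = "\<lambda>i. sorted_list_of_set T ! i"])
  fix a assume "a \<in> {..<card T}"
  hence a: "a < card T" by simp
  show "pos T (sorted_list_of_set T ! a) = a" by (rule pos_nth[OF T a])
  show "sorted_list_of_set T ! a \<in> T" using a T by (metis nth_mem sl_facts)
next
  fix b assume b: "b \<in> T"
  show "sorted_list_of_set T ! pos T b = b" "pos T b \<in> {..<card T}" using nth_pos[OF T b] by auto
qed simp

lemma dl_mult:
  assumes T: "finite (T::nat set)" and len: "card T = length rs" "length cs = length rs"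
    and eq: "\<And>r c. r \<in> set rs \<Longrightarrow> c \<in> set cs \<Longrightarrow> f r c = (\<Sum>t\<in>T. g r t * h t c)"
  shows "dl f rs cs = dl g rs (sorted_list_of_set T) * dl h (sorted_list_of_set T) cs"
proof -
  let ?m = "length rs"
  let ?ts = "sorted_list_of_set T"
  let ?G = "mat ?m ?m (\<lambda>(a,b). g (rs!a) (?ts!b))"
  let ?H = "mat ?m ?m (\<lambda>(a,b). h (?ts!a) (cs!b))"
  have lt: "length ?ts = ?m" using T len by simp
  have "mat ?m ?m (\<lambda>(a,b). f (rs!a) (cs!b)) = ?G * ?H"
  proof (rule eq_matI)
    fix a b assume a: "a < dim_row (?G * ?H)" and b: "b < dim_col (?G * ?H)"
    hence a': "a < ?m" and b': "b < ?m" by auto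
    have "(?G * ?H) $$ (a,b) = (\<Sum>i<?m. g (rs!a) (?ts!i) * h (?ts!i) (cs!b))"
      using a' b' by (simp add: scalar_prod_def atLeast0LessThan)
    also have "\<dots> = (\<Sum>t\<in>T. g (rs!a) t * h t (cs!b))"
      using sum_sl[OF T, of "\<lambda>t. g (rs!a) t * h t (cs!b)"] len by simp
    also have "\<dots> = f (rs!a) (cs!b)" using eq a' b' len by simp
    finally show "mat ?m ?m (\<lambda>(a,b). f (rs!a) (cs!b)) $$ (a,b) = (?G * ?H) $$ (a,b)" using a' b' by simp
  qed auto
  hence "dl f rs cs = det (?G * ?H)" unfolding dl_def by simp
  also have "\<dots> = det ?G * det ?H" by (rule det_mult) auto
  finally show ?thesis unfolding dl_def lt by simp
qed

lemma dl_unit: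
  assumes A: "finite A" and B: "finite B" and c: "card A = card B"
  shows "dl (\<lambda>r c. if r = c then 1 else 0) (sorted_list_of_set A) (sorted_list_of_set (B::nat set)) = (if A = B then 1 else 0)"
proof (cases "A = B")
  case True
  let ?xs = "sorted_list_of_set A"
  have "mat (length ?xs) (length ?xs) (\<lambda>(a,b). if ?xs!a = ?xs!b then 1 else (0::'a)) = 1\<^sub>m (length ?xs)"
    using A by (intro eq_matI) (auto simp: nth_eq_iff_index_eq)
  hence "det (mat (length ?xs) (length ?xs) (\<lambda>(a,b). if ?xs!a = ?xs!b then 1 else (0::'a))) = 1" by (simp only: det_one)
  thus ?thesis unfolding dl_def using True by simp
next
  case False
  have "\<not> B \<subseteq> A" using A B c False by (metis card_subset_eq)
  then obtain b where b: "b \<in> B" "b \<notin> A" by auto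
  have "dl (\<lambda>r c. if r = c then 1 else 0) (sorted_list_of_set A) (sorted_list_of_set B) = (0::'a)"
    by (rule dl_zero_col[where c = b]) (use A B b c in auto)
  thus ?thesis using False by simp
qed

lemma sl_star:
  assumes A: "A \<subseteq> {1..n}"
  shows "sorted_list_of_set (star n A) = rev (map (\<lambda>k. n + 1 - k) (sorted_list_of_set A))"
proof -
  have fA: "finite A" using A finite_subset by blast
  let ?xs = "sorted_list_of_set A"
  let ?ys = "rev (map (\<lambda>k. n + 1 - k) ?xs)"
  have inj: "inj_on (\<lambda>k. n + 1 - k) A"
  proof (rule inj_onI)
    fix a b assume "a \<in> A" "b \<in> A" "n + 1 - a = n + 1 - b"
    moreover have "a \<le> n" "b \<le> n" using A \<open>a \<in> A\<close> \<open>b \<in> A\<close> by auto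
    ultimately show "a = b" by simp
  qed
  have so: "sorted_wrt (<) ?xs" using fA by simp
  have "sorted_wrt (>) (map (\<lambda>k. n + 1 - k) ?xs)"
    unfolding sorted_wrt_map
  proof (rule sorted_wrt_mono_rel[OF _ so])
    fix a b assume "a \<in> set ?xs" "b \<in> set ?xs" "a < b"
    thus "n + 1 - b < n + 1 - a" using A fA by auto
  qed
  hence s: "sorted_wrt (<) ?ys" by (simp add: sorted_wrt_rev)
  have "set ?ys = star n A" unfolding star_def using fA by simp
  moreover have "distinct ?ys" using s by (auto simp: strict_sorted_iff)
  moreover have "sorted_list_of_set (set ?ys) = ?ys"
    using s \<open>distinct ?ys\<close> by (metis sorted_list_of_set_unique distinct_card finite_set subset_UNIV)
  ultimately show ?thesis by simp
qed

lemma prod_sl: assumes T: "finite (T::nat set)" shows "(\<Prod>i<card T. g (sorted_list_of_set T ! i)) = (\<Prod>t\<in>T. g t)"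
proof (rule prod.reindex_bij_witness[where i = "pos T" and j = "\<lambda>i. sorted_list_of_set T ! i"])
  fix a assume "a \<in> {..<card T}"
  hence a: "a < card T" by simp
  show "pos T (sorted_list_of_set T ! a) = a" by (rule pos_nth[OF T a])
  show "sorted_list_of_set T ! a \<in> T" using a T by (metis nth_mem sl_facts)
next
  fix b assume b: "b \<in> T"
  show "sorted_list_of_set T ! pos T b = b" "pos T b \<in> {..<card T}" using nth_pos[OF T b] by auto
qed simp

definition MM :: "nat \<Rightarrow> (nat \<Rightarrow> 'a::comm_ring_1) \<Rightarrow> nat \<Rightarrow> nat \<Rightarrow> 'a" where
  "MM n x k j = x k * PP n x (x k ^ 2) j"

lemma MM_zero: assumes "j < k" "k \<le> n" shows "MM n x k j = 0"
proof -
  have "k \<in> {j<..n}" using assms by simp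
  hence "PP n x (x k ^ 2) j = 0" unfolding PP_def by (intro prod_zero) auto
  thus ?thesis unfolding MM_def by simp
qed

lemma dl_MM_diag:
  assumes J: "J \<subseteq> {1..n}"
  shows "dl (MM n x) (sorted_list_of_set J) (sorted_list_of_set J) = fJ n x J"
proof -
  have fJ: "finite J" using J finite_subset by blast
  let ?js = "sorted_list_of_set J"
  let ?r = "card J"
  let ?A = "mat ?r ?r (\<lambda>(a,b). MM n x (?js!a) (?js!b))"
  have ut: "upper_triangular ?A"
  proof (rule upper_triangularI)
    fix i j assume ji: "j < i" and i: "i < dim_row ?A"
    hence i': "i < ?r" and j': "j < ?r" by auto
    have "?js!j < ?js!i" using sl_less_iff[OF fJ j' i'] ji by simp
    moreover have "?js!i \<le> n" using J fJ i' by (metis atLeastAtMost_iff nth_mem sl_facts subsetD)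
    ultimately show "?A $$ (i,j) = 0" using i' j' by (simp add: MM_zero)
  qed
  have "dl (MM n x) ?js ?js = det ?A" unfolding dl_def using fJ by simp
  also have "\<dots> = prod_list (diag_mat ?A)" by (rule det_upper_triangular[OF ut mat_carrier])
  also have "\<dots> = (\<Prod>i<?r. MM n x (?js!i) (?js!i))"
    by (simp add: prod_list_diag_prod atLeast0LessThan)
  also have "\<dots> = (\<Prod>j\<in>J. MM n x j j)" by (rule prod_sl[OF fJ])
  also have "\<dots> = fJ n x J" unfolding fJ_def MM_def PP_def by simp
  finally show ?thesis .
qed

lemma dl_MM_gale:
  assumes K: "K \<subseteq> {1..n}" and J: "J \<subseteq> {1..n}" and c: "card J = card K" and ng: "\<not> gale_le K J"
  shows "dl (MM n x) (sorted_list_of_set K) (sorted_list_of_set J) = 0"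
proof -
  have fJ: "finite J" using J finite_subset by blast
  have fK: "finite K" using K finite_subset by blast
  let ?js = "sorted_list_of_set J"
  let ?ks = "sorted_list_of_set K"
  obtain s where s: "s < card K" "?ks ! s > ?js ! s" using ng c unfolding gale_le_def by (auto simp: not_le)
  have sJ: "s < card J" using s c by simp
  have lenk: "length ?ks = card J" using fK c by simp
  have sle: "s \<le> card J" using sJ by simp
  have "dl (MM n x) ?ks ?js = (\<Sum>C\<in>{C. C \<subseteq> J \<and> card C = s}.
     (-1)^((\<Sum>c\<in>C. pos J c) + s*(s-1) div 2) * dl (MM n x) (take s ?ks) (sorted_list_of_set C)
        * dl (MM n x) (drop s ?ks) (sorted_list_of_set (J - C)))"
    by (rule laplace_gen[OF fJ lenk sle])
  also have "\<dots> = 0"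
  proof (rule sum.neutral, rule ballI)
    fix C assume "C \<in> {C. C \<subseteq> J \<and> card C = s}"
    hence CJ: "C \<subseteq> J" and cC: "card C = s" by auto
    have fC: "finite C" using CJ fJ finite_subset by blast
    let ?T = "set (take (Suc s) ?js)"
    have cT: "card ?T = Suc s" using sJ fJ by (simp add: distinct_card)
    have "\<not> ?T \<subseteq> C"
    proof
      assume "?T \<subseteq> C"
      hence "card ?T \<le> card C" using fC card_mono by blast
      thus False using cT cC by simp
    qed
    then obtain c0 where c0: "c0 \<in> ?T" "c0 \<notin> C" by auto
    obtain t where t0: "t < length (take (Suc s) ?js)" "take (Suc s) ?js ! t = c0"
      using c0(1) by (meson in_set_conv_nth)
    have t: "t < Suc s" "c0 = ?js ! t" using t0 by simp_all
    have "c0 \<in> set ?js" using c0(1) by (meson in_set_takeD)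
    hence c0J: "c0 \<in> J" using fJ by simp
    have lj: "length ?js = card J" using fJ by simp
    have "?js ! t \<le> ?js ! s" by (rule sorted_nth_mono) (use t sJ fJ lj in simp_all)
    hence c0le: "c0 \<le> ?js ! s" using t by simp
    have lk: "length ?ks = card K" using fK by simp
    have zero: "MM n x \<rho> c0 = 0" if rho: "\<rho> \<in> set (drop s ?ks)" for \<rho>
    proof -
      obtain u where u0: "u < length (drop s ?ks)" "drop s ?ks ! u = \<rho>"
        using rho unfolding in_set_conv_nth by blast
      have su: "s + u < card K" using u0(1) lk by simp
      have sl: "s \<le> length ?ks" using s(1) lk by simp
      have u2: "\<rho> = ?ks ! (s + u)" using u0(2) nth_drop[OF sl, of u] by simp
      have r1: "?ks ! s \<le> ?ks ! (s + u)"
        by (rule sorted_nth_mono) (use su lk fK in simp_all)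
      have r2: "?ks ! (s + u) \<in> K" using su lk fK by (metis nth_mem sl_facts)
      have "c0 < \<rho>" using c0le s(2) r1 u2 by linarith
      moreover have "\<rho> \<le> n" using K r2 u2 by (meson atLeastAtMost_iff subsetD)
      ultimately show ?thesis by (rule MM_zero)
    qed
    have "dl (MM n x) (drop s ?ks) (sorted_list_of_set (J - C)) = 0"
    proof (rule dl_zero_col[where c = c0])
      show "c0 \<in> set (sorted_list_of_set (J - C))" using c0J c0 fJ by simp
      show "\<And>r. r \<in> set (drop s ?ks) \<Longrightarrow> MM n x r c0 = 0" by (rule zero)
      show "length (sorted_list_of_set (J - C)) = length (drop s ?ks)"
        using fJ fK CJ cC c by (simp add: card_Diff_subset fC)
    qed
    thus "(-1)^((\<Sum>c\<in>C. pos J c) + s*(s-1) div 2) * dl (MM n x) (take s ?ks) (sorted_list_of_set C)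
        * dl (MM n x) (drop s ?ks) (sorted_list_of_set (J - C)) = 0" by simp
  qed
  finally show ?thesis .
qed

lemma dl_H_one: "dl (Hmat n x) [1..<Suc n] [1..<Suc n] = 1"
proof -
  let ?A = "mat n n (\<lambda>(a,b). Hmat n x ([1..<Suc n]!a) ([1..<Suc n]!b))"
  have ent: "?A $$ (i,j) = hsq x {Suc i..n} (int (Suc i) - int (Suc j))" if "i < n" "j < n" for i j
    using that by (simp add: Hmat_def nth_upt del: upt_Suc)
  have "det ?A = prod_list (diag_mat ?A)"
  proof (rule det_lower_triangular[of n])
    fix i j assume "i < j" "j < n"
    thus "?A $$ (i,j) = 0" using ent[of i j] by (simp add: hsq_neg)
  qed simp
  also have "\<dots> = (\<Prod>i = 0..<n. ?A $$ (i,i))" by (simp add: prod_list_diag_prod)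
  also have "\<dots> = 1"
  proof (rule prod.neutral, rule ballI)
    fix i assume "i \<in> {0..<n}"
    hence "i < n" by simp
    thus "?A $$ (i,i) = 1" by (subst ent) (simp_all add: hsq_zero)
  qed
  finally have "det ?A = 1" .
  moreover have "length [1..<Suc n] = n" by simp
  ultimately show ?thesis unfolding dl_def by simp
qed

lemma map_rev_upt: "map (\<lambda>i. n + 1 - i) [1..<Suc n] = rev [1..<Suc n]"
  by (rule nth_equalityI) (auto simp: rev_nth simp del: upt_Suc)

lemma dl_G:
  "dl (\<lambda>j i. Hmat n x j (n + 1 - i)) (sorted_list_of_set {1..n}) (sorted_list_of_set {1..n})
     = signof (\<lambda>i. if i < n then n - 1 - i else i)"
proof -
  have sl: "sorted_list_of_set {1..n} = [1..<Suc n]"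
    by (metis atLeastLessThanSuc_atLeastAtMost sorted_list_of_set_range)
  have "dl (\<lambda>j i. Hmat n x j (n + 1 - i)) [1..<Suc n] [1..<Suc n]
      = dl (Hmat n x) [1..<Suc n] (map (\<lambda>i. n + 1 - i) [1..<Suc n])"
    by (rule dl_map_cols[symmetric]) (simp del: upt_Suc)
  also have "\<dots> = dl (Hmat n x) [1..<Suc n] (rev [1..<Suc n])" unfolding map_rev_upt ..
  also have "\<dots> = signof (\<lambda>i. if i < length [1..<Suc n] then length [1..<Suc n] - 1 - i else i) * dl (Hmat n x) [1..<Suc n] [1..<Suc n]"
    by (rule dl_rev_cols) (simp del: upt_Suc)
  also have "length [1..<Suc n] = n" by simp
  finally show ?thesis unfolding sl dl_H_one by simp
qed


definition revp :: "nat \<Rightarrow> nat \<Rightarrow> nat" where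
  "revp m = (\<lambda>i. if i < m then m - 1 - i else i)"

lemma pos_atLeast1: "c \<in> {1..n} \<Longrightarrow> pos {1..n} c = c - 1"
proof -
  assume c: "c \<in> {1..n}"
  have "{s\<in>{1..n}. s < c} = {1..<c}" using c by auto
  thus ?thesis unfolding pos_def by simp
qed

lemma sign_sum:
  assumes I: "I \<subseteq> {1..n}" "card I = r"
  shows "(-1::'a::comm_ring_1) ^ (\<Sum>I) = (-1)^((\<Sum>c\<in>I. pos {1..n} c) + r*(r-1) div 2) * (-1)^(r + r*(r-1) div 2)"
proof -
  have fI: "finite I" using I finite_subset by blast
  have "(\<Sum>I) = (\<Sum>c\<in>I. pos {1..n} c + 1)"
  proof (rule sum.cong[OF refl])
    fix c assume "c \<in> I"
    hence "c \<in> {1..n}" using I by auto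
    thus "c = pos {1..n} c + 1" using pos_atLeast1 by simp
  qed
  also have "\<dots> = (\<Sum>c\<in>I. pos {1..n} c) + r" unfolding sum.distrib using I fI by simp
  finally have e: "(\<Sum>I) + 2 * (r*(r-1) div 2) = ((\<Sum>c\<in>I. pos {1..n} c) + r*(r-1) div 2) + (r + r*(r-1) div 2)"
    by simp
  have "(-1::'a) ^ (\<Sum>I) = (-1) ^ ((\<Sum>I) + 2 * (r*(r-1) div 2))"
    by (simp add: power_add power_mult)
  also have "\<dots> = (-1)^((\<Sum>c\<in>I. pos {1..n} c) + r*(r-1) div 2) * (-1)^(r + r*(r-1) div 2)"
    unfolding e by (simp add: power_add)
  finally show ?thesis .
qed

lemma frakF_eq:
  fixes x :: "nat \<Rightarrow> 'a::comm_ring_1"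
  assumes J: "J \<subseteq> {1..n}" and K: "K \<subseteq> {1..n}" and c: "card J = card K"
  shows "frakF n x J K = signof (revp (n - card J)) * (-1)^(card J + card J*(card J-1) div 2)
     * (-1)^((\<Sum>c\<in>J. pos {1..n} c) + card J*(card J-1) div 2) * signof (revp n)
     * dl (MM n x) (sorted_list_of_set K) (sorted_list_of_set J)"
proof -
  define S where "S = {1..n}"
  define r where "r = card J"
  define Jc where "Jc = S - J"
  define ks where "ks = sorted_list_of_set K"
  define jcs where "jcs = sorted_list_of_set Jc"
  define G where "G = (\<lambda>j i. Hmat n x j (n + 1 - i))"
  define V where "V = (\<lambda>k i. x k ^ (2 * i - 1))"
  define \<sigma> where "\<sigma> = (signof (revp (n - r)) :: 'a)"
  define c2 where "c2 = ((-1)^(r + r*(r-1) div 2) :: 'a)"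
  define \<epsilon> where "\<epsilon> = (\<lambda>C. (-1::'a)^((\<Sum>c\<in>C. pos S c) + r*(r-1) div 2))"
  define P where "P = {I. I \<subseteq> S \<and> card I = r}"
  have fS: "finite S" and cS: "card S = n" unfolding S_def by simp_all
  have fJ: "finite J" using J finite_subset by blast
  have fK: "finite K" using K finite_subset by blast
  have JS: "J \<subseteq> S" using J unfolding S_def .
  have rn: "r \<le> n" using card_mono[OF fS JS] cS unfolding r_def by simp
  have lks: "length ks = r" unfolding ks_def r_def using fK c by simp
  have cJc: "card Jc = n - r" unfolding Jc_def r_def using JS fS cS fJ by (simp add: card_Diff_subset)
  have ljcs: "length jcs = n - r" unfolding jcs_def using cJc by simp
  have fJc: "finite Jc" unfolding Jc_def using fS by simp
  have stepA: "minor (Hmat n x) ({1..n} - J) (star n ({1..n} - I)) = \<sigma> * dl G jcs (sorted_list_of_set (S - I))"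
    if I: "I \<in> P" for I
  proof -
    have IS: "I \<subseteq> S" and cI: "card I = r" using I unfolding P_def by auto
    have fI: "finite I" using IS fS finite_subset by blast
    have cSI: "card (S - I) = n - r" using IS fS cS cI fI by (simp add: card_Diff_subset)
    have sub: "S - I \<subseteq> {1..n}" unfolding S_def by auto
    let ?cs = "sorted_list_of_set (S - I)"
    have "finite (S - I)" using fS by simp
    hence "length ?cs = card (S - I)" by simp
    hence lcs: "length ?cs = length jcs" using cSI ljcs by linarith
    have "minor (Hmat n x) ({1..n} - J) (star n ({1..n} - I)) = dl (Hmat n x) jcs (rev (map (\<lambda>k. n + 1 - k) ?cs))"
      unfolding minor_dl jcs_def Jc_def S_def using sl_star[OF sub[unfolded S_def]] by simp
    also have "\<dots> = signof (revp (length jcs)) * dl (Hmat n x) jcs (map (\<lambda>k. n + 1 - k) ?cs)"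
      unfolding revp_def by (rule dl_rev_cols) (simp only: length_map lcs)
    also have "dl (Hmat n x) jcs (map (\<lambda>k. n + 1 - k) ?cs) = dl G jcs ?cs"
      unfolding G_def by (rule dl_map_cols) (rule lcs)
    finally show ?thesis unfolding \<sigma>_def ljcs .
  qed
  have "frakF n x J K = (\<Sum>I\<in>P. (-1) ^ (\<Sum>I) * minor (Hmat n x) ({1..n} - J) (star n ({1..n} - I)) * minor V K I)"
    unfolding frakF_def P_def S_def r_def V_def ..
  also have "\<dots> = (\<Sum>I\<in>P. (-1) ^ (\<Sum>I) * (\<sigma> * dl G jcs (sorted_list_of_set (S - I))) * dl V ks (sorted_list_of_set I))"
  proof (rule sum.cong[OF refl])
    fix I assume I: "I \<in> P"
    show "(-1) ^ (\<Sum>I) * minor (Hmat n x) ({1..n} - J) (star n ({1..n} - I)) * minor V K I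
       = (-1) ^ (\<Sum>I) * (\<sigma> * dl G jcs (sorted_list_of_set (S - I))) * dl V ks (sorted_list_of_set I)"
      unfolding stepA[OF I] by (simp only: minor_dl ks_def)
  qed
  also have "\<dots> = \<sigma> * c2 * (\<Sum>I\<in>P. \<epsilon> I * dl V ks (sorted_list_of_set I) * dl G jcs (sorted_list_of_set (S - I)))"
    unfolding sum_distrib_left
  proof (rule sum.cong[OF refl])
    fix I assume "I \<in> P"
    hence "I \<subseteq> {1..n}" "card I = r" unfolding P_def S_def by auto
    from sign_sum[OF this, where 'a='a]
    show "(-1) ^ (\<Sum>I) * (\<sigma> * dl G jcs (sorted_list_of_set (S - I))) * dl V ks (sorted_list_of_set I) =
      \<sigma> * c2 * (\<epsilon> I * dl V ks (sorted_list_of_set I) * dl G jcs (sorted_list_of_set (S - I)))"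
      unfolding \<epsilon>_def c2_def S_def by (simp add: algebra_simps)
  qed
  finally have F1: "frakF n x J K = \<sigma> * c2 * (\<Sum>I\<in>P. \<epsilon> I * dl V ks (sorted_list_of_set I) * dl G jcs (sorted_list_of_set (S - I)))" .
  define fN where "fN = (\<lambda>z::nat+nat. case z of Inl k \<Rightarrow> V k | Inr j \<Rightarrow> G j)"
  define rsN where "rsN = map Inl ks @ map Inr jcs"
  have lrsN: "length rsN = card S" unfolding rsN_def using lks ljcs rn cS by simp
  have tk: "take r rsN = map Inl ks" "drop r rsN = map Inr jcs" unfolding rsN_def using lks by simp_all
  have lap1: "dl fN rsN (sorted_list_of_set S) = (\<Sum>I\<in>P. \<epsilon> I * dl V ks (sorted_list_of_set I) * dl G jcs (sorted_list_of_set (S - I)))"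
  proof -
    have "dl fN rsN (sorted_list_of_set S) = (\<Sum>C\<in>{C. C \<subseteq> S \<and> card C = r}.
       (-1)^((\<Sum>c\<in>C. pos S c) + r*(r-1) div 2) * dl fN (take r rsN) (sorted_list_of_set C)
          * dl fN (drop r rsN) (sorted_list_of_set (S - C)))"
      by (rule laplace_gen[OF fS lrsN]) (simp add: cS rn)
    also have "\<dots> = (\<Sum>I\<in>P. \<epsilon> I * dl V ks (sorted_list_of_set I) * dl G jcs (sorted_list_of_set (S - I)))"
      unfolding tk dl_map_rows P_def \<epsilon>_def fN_def by simp
    finally show ?thesis .
  qed
  define fN' where "fN' = (\<lambda>z::nat+nat. case z of Inl k \<Rightarrow> MM n x k | Inr j \<Rightarrow> (\<lambda>t. if j = t then 1 else 0))"
  have fact: "dl fN rsN (sorted_list_of_set S) = dl fN' rsN (sorted_list_of_set S) * dl G (sorted_list_of_set S) (sorted_list_of_set S)"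
  proof (rule dl_mult[OF fS])
    show "card S = length rsN" using lrsN by simp
    show "length (sorted_list_of_set S) = length rsN" using lrsN fS by simp
    fix \<rho> i assume \<rho>: "\<rho> \<in> set rsN" and i: "i \<in> set (sorted_list_of_set S)"
    have iS: "i \<in> S" using i fS by simp
    hence i1: "1 \<le> i" "i \<le> n" unfolding S_def by auto
    show "fN \<rho> i = (\<Sum>t\<in>S. fN' \<rho> t * G t i)"
    proof (cases \<rho>)
      case (Inl k)
      have "fN \<rho> i = x k ^ (2 * i - 1)" unfolding fN_def Inl V_def by simp
      also have "\<dots> = (\<Sum>j\<in>{1..n}. (x k * PP n x (x k ^ 2) j) * Hmat n x j (n + 1 - i))"
        by (rule entry_identity[OF i1])
      also have "\<dots> = (\<Sum>t\<in>S. fN' \<rho> t * G t i)"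
        unfolding fN'_def Inl G_def S_def MM_def by simp
      finally show ?thesis .
    next
      case (Inr j)
      have "j \<in> set jcs" using \<rho> Inr unfolding rsN_def by auto
      hence jS: "j \<in> S" unfolding jcs_def Jc_def using fS by simp
      have "(\<Sum>t\<in>S. fN' \<rho> t * G t i) = (\<Sum>t\<in>S. if t = j then G t i else 0)"
        unfolding fN'_def Inr by (intro sum.cong refl) auto
      also have "\<dots> = G j i" using jS fS by simp
      finally show ?thesis unfolding fN_def Inr by simp
    qed
  qed
  have detG: "dl G (sorted_list_of_set S) (sorted_list_of_set S) = signof (revp n)"
    unfolding G_def S_def revp_def by (rule dl_G)
  have lap2: "dl fN' rsN (sorted_list_of_set S) = \<epsilon> J * dl (MM n x) ks (sorted_list_of_set J)"
  proof -
    have "dl fN' rsN (sorted_list_of_set S) = (\<Sum>C\<in>{C. C \<subseteq> S \<and> card C = r}.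
       (-1)^((\<Sum>c\<in>C. pos S c) + r*(r-1) div 2) * dl fN' (take r rsN) (sorted_list_of_set C)
          * dl fN' (drop r rsN) (sorted_list_of_set (S - C)))"
      by (rule laplace_gen[OF fS lrsN]) (simp add: cS rn)
    also have "\<dots> = (\<Sum>C\<in>P. \<epsilon> C * dl (MM n x) ks (sorted_list_of_set C)
          * dl (\<lambda>j t. if j = t then 1 else 0) jcs (sorted_list_of_set (S - C)))"
      unfolding tk dl_map_rows P_def \<epsilon>_def fN'_def by simp
    also have "\<dots> = (\<Sum>C\<in>P. if C = J then \<epsilon> C * dl (MM n x) ks (sorted_list_of_set C) else 0)"
    proof (rule sum.cong[OF refl])
      fix C assume "C \<in> P"
      hence CS: "C \<subseteq> S" and cC: "card C = r" unfolding P_def by auto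
      have fC: "finite C" using CS fS finite_subset by blast
      have "card (S - C) = n - r" using CS fS cS cC fC by (simp add: card_Diff_subset)
      hence u: "dl (\<lambda>j t. if j = t then 1 else 0) jcs (sorted_list_of_set (S - C)) = (if Jc = S - C then 1 else (0::'a))"
        unfolding jcs_def using dl_unit[OF fJc _ , of "S - C"] fS cJc by simp
      have "(Jc = S - C) = (C = J)" unfolding Jc_def using CS JS by blast
      thus "\<epsilon> C * dl (MM n x) ks (sorted_list_of_set C) * dl (\<lambda>j t. if j = t then 1 else 0) jcs (sorted_list_of_set (S - C))
          = (if C = J then \<epsilon> C * dl (MM n x) ks (sorted_list_of_set C) else 0)" unfolding u by simp
    qed
    also have "\<dots> = \<epsilon> J * dl (MM n x) ks (sorted_list_of_set J)"
    proof -
      have "J \<in> P" unfolding P_def r_def using JS by simp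
      moreover have "finite P" unfolding P_def using fS by simp
      ultimately show ?thesis by (simp add: sum.delta')
    qed
    finally show ?thesis .
  qed
  have "frakF n x J K = \<sigma> * c2 * (\<epsilon> J * dl (MM n x) ks (sorted_list_of_set J) * signof (revp n))"
    using F1 lap1 fact detG lap2 by simp
  thus ?thesis unfolding \<sigma>_def c2_def \<epsilon>_def r_def S_def ks_def by (simp add: algebra_simps)
qed


lemma pm1_mult: "a \<in> {1, -1::int} \<Longrightarrow> b \<in> {1, -1} \<Longrightarrow> a * b \<in> {1, -1}" by auto
lemma pm1_sign: "sign p \<in> {1, -1::int}" by (simp add: sign_def)
lemma pm1_pow: "(-1::int) ^ k \<in> {1, -1}" by (cases "even k") simp_all

theorem mainTheorem8:
  fixes n :: nat and J K :: "nat set"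
  assumes "J \<subseteq> {1..n}" and "K \<subseteq> {1..n}" and "card J = card K"
  shows "(\<not> gale_le K J \<longrightarrow> (\<forall>x :: nat \<Rightarrow> 'a::comm_ring_1. frakF n x J K = 0))
       \<and> (\<exists>s \<in> {1, -1 :: int}. \<forall>x :: nat \<Rightarrow> 'a::comm_ring_1. frakF n x J J = of_int s * fJ n x J)"
proof
  show "\<not> gale_le K J \<longrightarrow> (\<forall>x :: nat \<Rightarrow> 'a::comm_ring_1. frakF n x J K = 0)"
  proof (intro impI allI)
    fix x :: "nat \<Rightarrow> 'a"
    assume ng: "\<not> gale_le K J"
    show "frakF n x J K = 0"
      unfolding frakF_eq[OF assms] dl_MM_gale[OF assms(2,1,3) ng] by simp
  qed
next
  define r where "r = card J"
  define s where "s = sign (revp (n - r)) * (-1)^(r + r*(r-1) div 2)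
     * (-1)^((\<Sum>c\<in>J. pos {1..n} c) + r*(r-1) div 2) * sign (revp n)"
  have s: "s \<in> {1, -1 :: int}" unfolding s_def by (intro pm1_mult pm1_sign pm1_pow)
  have "\<forall>x :: nat \<Rightarrow> 'a::comm_ring_1. frakF n x J J = of_int s * fJ n x J"
  proof
    fix x :: "nat \<Rightarrow> 'a"
    show "frakF n x J J = of_int s * fJ n x J"
      unfolding frakF_eq[OF assms(1) assms(1) refl] dl_MM_diag[OF assms(1)] s_def r_def
      by simp
  qed
  thus "\<exists>s \<in> {1, -1 :: int}. \<forall>x :: nat \<Rightarrow> 'a::comm_ring_1. frakF n x J J = of_int s * fJ n x J"
    using s by blast
qed


end
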